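(* Let $l_n,R_n>0$ ($n\in\mathbb N$) satisfy $l_n,R_n\to\infty$, $l_n^2/n\to0$, $n/R_n\to0$, $e^{-\pi l_n/2}R_n\to0$, and let $W_n(z)=\exp\!\big(-l_n\pi-il_n\log\frac{z-n}{z+n}\big)$ for $z\in\mathbb C_+$. Then for all sufficiently large $n$, $$|W_n(z)|<e^{-\pi l_n/2}\quad\text{for all } z\in\mathbb C_+ \text{ with } |z|=R_n.$$
   Context: $\mathbb C_+=\{\operatorname{Im}z>0\}$. For $z\in\mathbb C_+$ one has $\frac{z-n}{z+n}\in\mathbb C_+$, and $\log$ denotes the branch with imaginary part in $(0,\pi)$. *)

theory Defs
  imports "HOL-Analysis.Analysis"
begin

text \<open>For z in the upper half plane and n > 0, (z-n)/(z+n) lies in the upper half plane,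
  where the principal logarithm Ln has imaginary part in (0, pi); so Ln is the branch
  of the paper.\<close>

definition W :: "(nat \<Rightarrow> real) \<Rightarrow> nat \<Rightarrow> complex \<Rightarrow> complex" where
  "W l n z = exp (- of_real (l n * pi) - \<i> * of_real (l n) * Ln ((z - of_nat n) / (z + of_nat n)))"

end

theory Submission
  imports Defs
begin

lemma key:
  fixes z :: complex and L :: real and n :: nat
  assumes L: "L > 0" and z: "Im z > 0" and big: "cmod z > real n"
  shows "cmod (exp (- of_real (L * pi) - \<i> * of_real L * Ln ((z - of_nat n) / (z + of_nat n))))
          < exp (- pi * L / 2)"
proof -
  define w where "w = (z - of_nat n) / (z + of_nat n)"
  have zn: "z + of_nat n \<noteq> 0" proof assume "z + of_nat n = 0" hence "Im (z + of_nat n) = 0" by simp thus False using z by simp qed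
  have re: "Re w > 0"
  proof -
    have "Re w = ((Re z)^2 + (Im z)^2 - (real n)^2) / ((Re z + real n)^2 + (Im z)^2)"
      unfolding w_def by (simp add: Re_divide power2_eq_square algebra_simps)
    also have "(Re z)^2 + (Im z)^2 = (cmod z)^2" by (simp add: cmod_power2)
    finally have e: "Re w = ((cmod z)^2 - (real n)^2) / ((Re z + real n)^2 + (Im z)^2)" .
    have "(cmod z)^2 > (real n)^2" using big by (simp add: power_strict_mono)
    moreover have "(Re z + real n)^2 + (Im z)^2 > 0" using z by (simp add: add_nonneg_pos)
    ultimately show ?thesis unfolding e by simp
  qed
  hence w0: "w \<noteq> 0" by auto
  have "\<bar>Im (Ln w)\<bar> < pi/2" using Re_Ln_pos_lt[OF w0] re by simp
  hence im: "Im (Ln w) < pi/2" by linarith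
  have "cmod (exp (- of_real (L * pi) - \<i> * of_real L * Ln w)) = exp (- L*pi + L * Im (Ln w))"
    by (simp add: norm_exp_eq_Re)
  also have "\<dots> < exp (- pi * L / 2)"
    using im L by (simp add: mult_strict_left_mono algebra_simps)
  finally show ?thesis unfolding w_def .
qed

theorem lemma4:
  fixes l R :: "nat \<Rightarrow> real"
  assumes l_pos: "\<And>n. l n > 0"
    and R_pos: "\<And>n. R n > 0"
    and l_inf: "filterlim l at_top sequentially"
    and R_inf: "filterlim R at_top sequentially"
    and l2_n: "(\<lambda>n. (l n)^2 / real n) \<longlonglongrightarrow> 0"
    and n_R: "(\<lambda>n. real n / R n) \<longlonglongrightarrow> 0"
    and exp_R: "(\<lambda>n. exp (- pi * l n / 2) * R n) \<longlonglongrightarrow> 0"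
  shows "\<forall>\<^sub>F n in sequentially. \<forall>z. Im z > 0 \<and> cmod z = R n \<longrightarrow>
           cmod (W l n z) < exp (- pi * l n / 2)"
proof -
  have "\<forall>\<^sub>F n in sequentially. real n / R n < 1"
    using n_R by (simp add: order_tendstoD(2))
  then show ?thesis
  proof (rule eventually_mono)
    fix n assume "real n / R n < 1"
    hence nR: "real n < R n" using R_pos[of n] by (simp add: divide_less_eq)
    show "\<forall>z. Im z > 0 \<and> cmod z = R n \<longrightarrow> cmod (W l n z) < exp (- pi * l n / 2)"
      using key[OF l_pos] nR unfolding W_def by auto
  qed
qed

end
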